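(* Let $\{p_{\alpha}:\alpha<2^{\mathfrak{c}}\}\subseteq\omega^*$ be a family with the following property (P): for every countably infinite $D\subseteq 2^{\mathfrak{c}}$ and every family $\{f_\alpha:\alpha\in D\}$ of one-to-one sequences $f_\alpha:\omega\to[2^{\mathfrak{c}}]^{<\omega}$ each with linearly independent range, there are pairwise disjoint sets $U_\alpha\subseteq\omega$ ($\alpha\in D$) with $U_\alpha\in p_\alpha$ for all $\alpha\in D$ and $\{f_\alpha(n):\alpha\in D,\ n\in U_\alpha\}$ linearly independent. Let $I\subseteq 2^{\mathfrak{c}}$ and let $\{f_{\alpha}:\alpha\in I\}$ be a family of one-to-one sequences $f_\alpha:\omega\to[2^{\mathfrak{c}}]^{<\omega}$, each with linearly independent range. Let $D\subseteq 2^{\mathfrak{c}}$ be countably infinite such that $\bigcup_{n\in\omega}f_{\alpha}(n)\subseteq D$ for every $\alpha\in D\cap I$. Let $D_0\subseteq D$ be finite and $F:D_0\to\{0,1\}$ any function. Then there exists a group homomorphism $\phi:[D]^{<\omega}\to\{0,1\}$ such that $\phi(\{\alpha\})=p_{\alpha}\text{-}\lim_{n\in\omega}\phi(f_{\alpha}(n))$ for every $\alpha\in D\cap I$, and $\phi(\{d\})=F(d)$ for every $d\in D_0$.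
   Context: $\mathfrak{c}=2^{\aleph_0}$, and $2^{\mathfrak{c}}$ is regarded as the set of ordinals below it. $\omega^*$ is the set of free ultrafilters on $\omega$. For a set $X$, $[X]^{<\omega}$ is the set of finite subsets of $X$, a Boolean group (vector space over the field $\{0,1\}=\mathbb{Z}/2$) under symmetric difference with zero $\emptyset$; linear independence refers to this structure, and $\{0,1\}$ is the group $\mathbb{Z}/2$. For $p\in\omega^*$ and a sequence $(x_n)$ in $\{0,1\}$ (discrete), $p\text{-}\lim_{n}x_n$ is the unique $i\in\{0,1\}$ with $\{n:x_n=i\}\in p$. (A family with property (P) exists in ZFC.) *)

theory Defs
  imports Main "HOL-Library.Equipollence" "HOL-Library.Countable_Set"
begin

definition free_ultrafilter :: "nat set set \<Rightarrow> bool" where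
  "free_ultrafilter U \<longleftrightarrow>
     UNIV \<in> U \<and> {} \<notin> U \<and>
     (\<forall>A B. A \<in> U \<and> B \<in> U \<longrightarrow> A \<inter> B \<in> U) \<and>
     (\<forall>A B. A \<in> U \<and> A \<subseteq> B \<longrightarrow> B \<in> U) \<and>
     (\<forall>A. A \<in> U \<or> - A \<in> U) \<and>
     (\<forall>A. finite A \<longrightarrow> A \<notin> U)"

text \<open>Symmetric difference (the group operation of [X]^{<omega}).\<close>
definition symd :: "'a set \<Rightarrow> 'a set \<Rightarrow> 'a set" where
  "symd A B = (A - B) \<union> (B - A)"

text \<open>Sum over Z/2 of a finite collection of finite sets: points lying in an odd number of them.\<close>
definition zsum :: "'a set set \<Rightarrow> 'a set" where
  "zsum T = {x. odd (card {A \<in> T. x \<in> A})}"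

definition lin_indep :: "'a set set \<Rightarrow> bool" where
  "lin_indep S \<longleftrightarrow> (\<forall>T. T \<subseteq> S \<and> finite T \<and> T \<noteq> {} \<longrightarrow> zsum T \<noteq> {})"

definition lin_indep_fam :: "('i \<Rightarrow> 'a set) \<Rightarrow> 'i set \<Rightarrow> bool" where
  "lin_indep_fam x J \<longleftrightarrow> inj_on x J \<and> lin_indep (x ` J)"

text \<open>Group homomorphism [D]^{<omega} -> Z/2, with Z/2 = bool under exclusive or (False = 0, True = 1).\<close>
definition z2_hom :: "'a set \<Rightarrow> ('a set \<Rightarrow> bool) \<Rightarrow> bool" where
  "z2_hom D \<phi> \<longleftrightarrow> (\<forall>A B. finite A \<and> A \<subseteq> D \<and> finite B \<and> B \<subseteq> D \<longrightarrow>
       \<phi> (symd A B) = (\<phi> A \<noteq> \<phi> B))"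

definition plim :: "nat set set \<Rightarrow> (nat \<Rightarrow> bool) \<Rightarrow> bool" where
  "plim p x = (THE i. {n. x n = i} \<in> p)"

definition good_seq :: "(nat \<Rightarrow> 'a set) \<Rightarrow> bool" where
  "good_seq f \<longleftrightarrow> inj f \<and> (\<forall>n. finite (f n)) \<and> lin_indep (range f)"

text \<open>Property (P) for a family p indexed by the (type of the) cardinal 2^c.\<close>
definition propP :: "('k \<Rightarrow> nat set set) \<Rightarrow> bool" where
  "propP p \<longleftrightarrow> (\<forall>(D::'k set) (g::'k \<Rightarrow> nat \<Rightarrow> 'k set).
     countable D \<and> infinite D \<and> (\<forall>\<alpha>\<in>D. good_seq (g \<alpha>)) \<longrightarrow>
     (\<exists>U::'k \<Rightarrow> nat set.
        (\<forall>\<alpha>\<in>D. U \<alpha> \<in> p \<alpha>) \<and>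
        (\<forall>\<alpha>\<in>D. \<forall>\<beta>\<in>D. \<alpha> \<noteq> \<beta> \<longrightarrow> U \<alpha> \<inter> U \<beta> = {}) \<and>
        lin_indep_fam (\<lambda>(\<alpha>, n). g \<alpha> n) {(\<alpha>, n). \<alpha> \<in> D \<and> n \<in> U \<alpha>}))"

end

theory Submission
  imports Defs "HOL.Vector_Spaces" "HOL-Library.Z2" "HOL-Library.Function_Algebras"
begin

definition vec :: "'a set \<Rightarrow> 'a \<Rightarrow> bit" where
  "vec A = (\<lambda>x. if x \<in> A then 1 else 0)"

lemma vec_zero_iff: "vec A = 0 \<longleftrightarrow> A = {}"
  by (auto simp: vec_def fun_eq_iff)

lemma bit_add_self: "(a::bit) + a = 0"
  by (cases a) auto

lemma fun_add_self: "(v::'a \<Rightarrow> bit) + v = 0"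
  by (simp add: fun_eq_iff bit_add_self)

lemma vec_symd: "vec (symd A B) = vec A + vec B"
  by (auto simp: vec_def symd_def fun_eq_iff)

lemma sum_fun_apply: "(\<Sum>i\<in>T. (v i :: 'a \<Rightarrow> 'b::comm_monoid_add)) x = (\<Sum>i\<in>T. v i x)"
  by (induction T rule: infinite_finite_induct) auto

lemma zsum_insert:
  assumes "finite T" "A \<notin> T"
  shows "zsum (insert A T) = symd A (zsum T)"
proof -
  have "card {B \<in> insert A T. x \<in> B} = card {B \<in> T. x \<in> B} + (if x \<in> A then 1 else 0)" for x
  proof (cases "x \<in> A")
    case True
    then have "{B \<in> insert A T. x \<in> B} = insert A {B \<in> T. x \<in> B}" by auto
    then show ?thesis using assms True by simp
  next
    case False
    then have "{B \<in> insert A T. x \<in> B} = {B \<in> T. x \<in> B}" by auto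
    then show ?thesis using False by simp
  qed
  then show ?thesis by (auto simp: zsum_def symd_def)
qed

lemma vec_zsum: "finite T \<Longrightarrow> vec (zsum T) = (\<Sum>A\<in>T. vec A)"
proof (induction T rule: finite_induct)
  case empty
  then show ?case by (simp add: zsum_def vec_def fun_eq_iff)
next
  case (insert A T)
  then show ?case by (simp add: zsum_insert vec_symd)
qed

lemma sum_const_bit:
  assumes "finite A" shows "(\<Sum>x\<in>A. (e::'a \<Rightarrow> bit)) = (if even (card A) then 0 else e)"
  using assms
proof (induction A rule: finite_induct)
  case empty
  then show ?case by simp
next
  case (insert x F)
  have "(\<Sum>y\<in>insert x F. e) = e + (\<Sum>y\<in>F. e)"
    by (rule sum.insert[OF insert(1,2)])
  also have "\<dots> = e + (if even (card F) then 0 else e)" by (simp only: insert(3))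
  also have "\<dots> = (if even (card (insert x F)) then 0 else e)"
    using insert(1,2) by (auto simp: fun_add_self)
  finally show ?case .
qed

lemma vec_singletons: "finite S \<Longrightarrow> (\<Sum>d\<in>S. vec {d}) = vec S"
proof (induction S rule: finite_induct)
  case empty
  then show ?case by (simp add: vec_def fun_eq_iff)
next
  case (insert x F)
  then show ?case by (auto simp: vec_def fun_eq_iff)
qed

definition indep_ix :: "('i \<Rightarrow> 'a \<Rightarrow> bit) \<Rightarrow> 'i set \<Rightarrow> bool" where
  "indep_ix v K \<longleftrightarrow> (\<forall>T. T \<subseteq> K \<and> finite T \<and> T \<noteq> {} \<longrightarrow> sum v T \<noteq> 0)"

lemma indep_ix_mono: "indep_ix v K \<Longrightarrow> K' \<subseteq> K \<Longrightarrow> indep_ix v K'"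
  unfolding indep_ix_def by blast

lemma fam_to_ix:
  assumes "lin_indep_fam g K" shows "indep_ix (\<lambda>i. vec (g i)) K"
  unfolding indep_ix_def
proof (intro allI impI)
  fix T assume T: "T \<subseteq> K \<and> finite T \<and> T \<noteq> {}"
  have inj: "inj_on g T" using assms T unfolding lin_indep_fam_def by (meson inj_on_subset)
  have "(\<Sum>i\<in>T. vec (g i)) = (\<Sum>A\<in>g ` T. vec A)"
    using sum.reindex[OF inj, of vec] by simp
  also have "\<dots> = vec (zsum (g ` T))" using T by (simp add: vec_zsum)
  finally have eq: "(\<Sum>i\<in>T. vec (g i)) = vec (zsum (g ` T))" .
  have li: "lin_indep (g ` K)" using assms unfolding lin_indep_fam_def by simp
  have "g ` T \<subseteq> g ` K \<and> finite (g ` T) \<and> g ` T \<noteq> {}" using T by auto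
  then have "zsum (g ` T) \<noteq> {}" using li unfolding lin_indep_def by simp
  then show "(\<Sum>i\<in>T. vec (g i)) \<noteq> 0" using eq vec_zero_iff by metis
qed

lemma ix_inj:
  assumes "indep_ix v K" shows "inj_on v K"
proof (rule inj_onI)
  fix i j assume "i \<in> K" "j \<in> K" "v i = v j"
  show "i = j"
  proof (rule ccontr)
    assume "i \<noteq> j"
    then have "sum v {i, j} = v i + v j" by simp
    also have "\<dots> = 0" using \<open>v i = v j\<close> by (simp add: fun_add_self)
    finally show False using assms \<open>i \<in> K\<close> \<open>j \<in> K\<close> unfolding indep_ix_def
      by (metis empty_not_insert finite.emptyI finite.insertI insert_subset singletonD subsetI)
  qed
qed

lemma ix_to_fam:
  assumes "indep_ix (\<lambda>i. vec (g i)) K" shows "lin_indep_fam g K"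
proof -
  have injv: "inj_on (\<lambda>i. vec (g i)) K" by (rule ix_inj[OF assms])
  then have inj: "inj_on g K" by (auto simp: inj_on_def)
  have "zsum S \<noteq> {}" if S: "S \<subseteq> g ` K" "finite S" "S \<noteq> {}" for S
  proof -
    obtain T where T: "T \<subseteq> K" "S = g ` T" using S by (meson subset_imageE)
    have fT: "finite T" using T inj S by (metis finite_image_iff inj_on_subset)
    have injT: "inj_on g T" using inj T by (meson inj_on_subset)
    have "vec (zsum S) = (\<Sum>A\<in>g ` T. vec A)" using S T by (simp add: vec_zsum)
    also have "\<dots> = (\<Sum>i\<in>T. vec (g i))" using sum.reindex[OF injT, of vec] by simp
    finally have eq: "vec (zsum S) = (\<Sum>i\<in>T. vec (g i))" .
    have "(\<Sum>i\<in>T. vec (g i)) \<noteq> 0" using assms T fT S unfolding indep_ix_def by blast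
    then show ?thesis using eq vec_zero_iff by metis
  qed
  then show ?thesis unfolding lin_indep_fam_def lin_indep_def using inj by blast
qed

lemma ix_uniq:
  assumes "indep_ix v K" "T1 \<subseteq> K" "T2 \<subseteq> K" "finite T1" "finite T2" "sum v T1 = sum v T2"
  shows "T1 = T2"
proof -
  have a: "sum v T1 = sum v (T1 - T2) + sum v (T1 \<inter> T2)"
  proof -
    have "(T1 - T2) \<inter> (T1 \<inter> T2) = {}" by blast
    then show ?thesis using sum.union_disjoint[of "T1 - T2" "T1 \<inter> T2" v] assms(4) by (simp add: Un_Diff_Int)
  qed
  have b: "sum v T2 = sum v (T2 - T1) + sum v (T2 \<inter> T1)"
  proof -
    have "(T2 - T1) \<inter> (T2 \<inter> T1) = {}" by blast
    then show ?thesis using sum.union_disjoint[of "T2 - T1" "T2 \<inter> T1" v] assms(5) by (simp add: Un_Diff_Int)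
  qed
  have c: "sum v (T1 - T2) = sum v (T2 - T1)" using a b assms(6) by (simp add: Int_commute)
  have "sum v ((T1 - T2) \<union> (T2 - T1)) = sum v (T1 - T2) + sum v (T2 - T1)"
    using assms(4,5) by (intro sum.union_disjoint) auto
  also have "\<dots> = 0" using c by (simp add: fun_add_self)
  finally have z: "sum v ((T1 - T2) \<union> (T2 - T1)) = 0" .
  have sub: "(T1 - T2) \<union> (T2 - T1) \<subseteq> K" using assms(2,3) by blast
  have fin: "finite ((T1 - T2) \<union> (T2 - T1))" using assms(4,5) by simp
  have "(T1 - T2) \<union> (T2 - T1) = {}"
  proof (rule ccontr)
    assume "(T1 - T2) \<union> (T2 - T1) \<noteq> {}"
    then have "sum v ((T1 - T2) \<union> (T2 - T1)) \<noteq> 0"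
      using assms(1) sub fin unfolding indep_ix_def by simp
    then show False using z by simp
  qed
  then show ?thesis by blast
qed

lemma fun_add_eq0: "(x::'a \<Rightarrow> bit) + y = 0 \<Longrightarrow> x = y"
  by (metis add.assoc add.left_neutral fun_add_self)

lemma good_ix: "good_seq b \<Longrightarrow> indep_ix (\<lambda>n. vec (b n)) UNIV"
  unfolding good_seq_def by (intro fam_to_ix) (simp add: lin_indep_fam_def)

lemma modseq:
  fixes b :: "nat \<Rightarrow> 'a set" and a :: 'a and T0 :: "nat set"
  assumes gb: "good_seq b"
  defines "T0 \<equiv> (if \<exists>T. finite T \<and> sum (\<lambda>n. vec (b n)) T = vec {a}
      then (SOME T. finite T \<and> sum (\<lambda>n. vec (b n)) T = vec {a}) else {})"
  shows "finite T0" "good_seq (\<lambda>n. if n \<in> T0 then b n else symd (b n) {a})"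
proof -
  let ?vb = "\<lambda>n. vec (b n)"
  let ?e = "vec {a}"
  let ?g = "\<lambda>n. if n \<in> T0 then b n else symd (b n) {a}"
  have ib: "indep_ix ?vb UNIV" using gb by (rule good_ix)
  have T0p: "finite T0 \<and> (T0 \<noteq> {} \<longrightarrow> sum ?vb T0 = ?e)"
  proof (cases "\<exists>T. finite T \<and> sum ?vb T = ?e")
    case True
    then have "finite T0 \<and> sum ?vb T0 = ?e" unfolding T0_def using someI_ex[OF True] by simp
    then show ?thesis by blast
  next
    case False
    then have "T0 = {}" unfolding T0_def by (rule if_not_P)
    then show ?thesis by simp
  qed
  then show "finite T0" by blast
  have ig: "indep_ix (\<lambda>n. vec (?g n)) UNIV"
    unfolding indep_ix_def
  proof (intro allI impI)
    fix S :: "nat set" assume S: "S \<subseteq> UNIV \<and> finite S \<and> S \<noteq> {}"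
    have "(\<Sum>n\<in>S. vec (?g n)) = (\<Sum>n\<in>S. ?vb n + (if n \<in> T0 then 0 else ?e))"
      by (intro sum.cong) (auto simp: vec_symd)
    also have "\<dots> = sum ?vb S + (\<Sum>n\<in>S. if n \<notin> T0 then ?e else 0)"
      by (simp only: sum.distrib[symmetric]) (intro sum.cong; auto)
    also have "(\<Sum>n\<in>S. if n \<notin> T0 then ?e else 0) = (\<Sum>n\<in>{n\<in>S. n \<notin> T0}. ?e)"
      using S by (simp only: sum.inter_filter)
    also have "\<dots> = (if even (card {n\<in>S. n \<notin> T0}) then 0 else ?e)"
      using S by (intro sum_const_bit) auto
    finally have eq: "(\<Sum>n\<in>S. vec (?g n)) = sum ?vb S + (if even (card {n\<in>S. n \<notin> T0}) then 0 else ?e)" .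
    show "(\<Sum>n\<in>S. vec (?g n)) \<noteq> 0"
    proof
      assume z: "(\<Sum>n\<in>S. vec (?g n)) = 0"
      show False
      proof (cases "even (card {n\<in>S. n \<notin> T0})")
        case True
        then have "sum ?vb S = 0" using z eq by simp
        then show False using ib S unfolding indep_ix_def by blast
      next
        case False
        then have se: "sum ?vb S = ?e" using z eq fun_add_eq0 by simp
        then have ex: "\<exists>T. finite T \<and> sum ?vb T = ?e" using S by blast
        have "sum ?vb T0 = ?e" unfolding T0_def using someI_ex[OF ex] ex by simp
        then have "S = T0" using ix_uniq[OF ib, of S T0] S T0p se by simp
        then show False using False by simp
      qed
    qed
  qed
  have fam: "lin_indep_fam ?g UNIV" by (rule ix_to_fam[OF ig])
  show "good_seq ?g"
    using fam gb unfolding good_seq_def lin_indep_fam_def symd_def by auto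
qed

lemma remove_finite:
  assumes iW: "indep_ix W K" and fD: "finite D0"
  shows "\<exists>R. finite R \<and> (\<forall>T S. T \<subseteq> K - R \<and> finite T \<and> S \<subseteq> D0 \<and> sum W T + vec S = 0 \<longrightarrow> T = {} \<and> S = {})"
proof -
  define RS where "RS S = (if \<exists>T. T \<subseteq> K \<and> finite T \<and> sum W T = vec S
      then (SOME T. T \<subseteq> K \<and> finite T \<and> sum W T = vec S) else {})" for S
  have RSp: "finite (RS S)" for S
  proof (cases "\<exists>T. T \<subseteq> K \<and> finite T \<and> sum W T = vec S")
    case True
    then show ?thesis unfolding RS_def using someI_ex[OF True] by simp
  next
    case False
    then have "RS S = {}" unfolding RS_def by (rule if_not_P)
    then show ?thesis by simp
  qed
  define R where "R = \<Union> (RS ` Pow D0)"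
  have fR: "finite R" unfolding R_def using fD RSp by simp
  have "T = {} \<and> S = {}" if T: "T \<subseteq> K - R" "finite T" "S \<subseteq> D0" "sum W T + vec S = 0" for T S
  proof -
    have e: "sum W T = vec S" using T(4) by (rule fun_add_eq0)
    then have ex: "\<exists>T. T \<subseteq> K \<and> finite T \<and> sum W T = vec S" using T by blast
    have p: "RS S \<subseteq> K \<and> finite (RS S) \<and> sum W (RS S) = vec S"
      unfolding RS_def using someI_ex[OF ex] ex by simp
    have "T = RS S" using ix_uniq[OF iW, of T "RS S"] p T e by auto
    moreover have "RS S \<subseteq> R" unfolding R_def using T(3) by blast
    ultimately have "T = {}" using T(1) by blast
    then have "vec S = 0" using e by simp
    then have "S = {}" using vec_zero_iff by metis
    then show ?thesis using \<open>T = {}\<close> by simp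
  qed
  then show ?thesis using fR by blast
qed

definition scl :: "bit \<Rightarrow> ('a \<Rightarrow> bit) \<Rightarrow> ('a \<Rightarrow> bit)" where
  "scl c v = (\<lambda>x. c * v x)"

lemma vs_scl: "vector_space (scl :: bit \<Rightarrow> ('a \<Rightarrow> bit) \<Rightarrow> _)"
  by unfold_locales (auto simp: scl_def fun_eq_iff algebra_simps)

lemma vs_bit: "vector_space ((*) :: bit \<Rightarrow> bit \<Rightarrow> bit)"
  by unfold_locales (auto simp: algebra_simps)

lemma vsp: "vector_space_pair (scl :: bit \<Rightarrow> ('a \<Rightarrow> bit) \<Rightarrow> _) ((*) :: bit \<Rightarrow> bit \<Rightarrow> bit)"
  unfolding vector_space_pair_def using vs_scl vs_bit by blast

lemma indep_C:
  assumes P: "\<forall>T S. T \<subseteq> K \<and> finite T \<and> S \<subseteq> D0 \<and> sum W T + vec S = 0 \<longrightarrow> T = {} \<and> S = {}"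
  shows "\<not> module.dependent (scl :: bit \<Rightarrow> ('a \<Rightarrow> bit) \<Rightarrow> _) (W ` K \<union> (\<lambda>d. vec {d}) ` D0)"
proof -
  interpret V: vector_space "scl :: bit \<Rightarrow> ('a \<Rightarrow> bit) \<Rightarrow> _" by (rule vs_scl)
  have iW: "indep_ix W K" unfolding indep_ix_def
  proof (intro allI impI)
    fix T assume "T \<subseteq> K \<and> finite T \<and> T \<noteq> {}"
    then show "sum W T \<noteq> 0" using P[rule_format, of T "{}"] by (auto simp: vec_def zero_fun_def)
  qed
  have injW: "inj_on W K" by (rule ix_inj[OF iW])
  have dis: "W i \<noteq> vec {d}" if "i \<in> K" "d \<in> D0" for i d
  proof
    assume "W i = vec {d}"
    then have "sum W {i} + vec {d} = 0" by (simp add: fun_add_self)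
    then show False using P[rule_format, of "{i}" "{d}"] that by auto
  qed
  show ?thesis unfolding V.independent_explicit_finite_subsets
  proof (intro allI impI ballI)
    fix X u v
    assume X: "X \<subseteq> W ` K \<union> (\<lambda>d. vec {d}) ` D0" "finite X"
      and su: "(\<Sum>v\<in>X. scl (u v) v) = 0" and v: "v \<in> X"
    define X1 where "X1 = {v \<in> X. u v \<noteq> 0}"
    have "(\<Sum>v\<in>X. scl (u v) v) = (\<Sum>v\<in>X. if u v \<noteq> 0 then v else 0)"
      by (intro sum.cong) (auto simp: scl_def fun_eq_iff)
    also have "\<dots> = sum (\<lambda>v. v) X1" unfolding X1_def using X(2) by (simp add: sum.inter_filter)
    finally have s1: "sum (\<lambda>v. v) X1 = 0" using su by simp
    define T where "T = {i \<in> K. W i \<in> X1}"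
    define S where "S = {d \<in> D0. vec {d} \<in> X1}"
    have fX1: "finite X1" using X(2) unfolding X1_def by simp
    have fT: "finite T"
    proof -
      have "inj_on W T" using injW unfolding T_def by (rule inj_on_subset) auto
      moreover have "W ` T \<subseteq> X1" unfolding T_def by auto
      ultimately show ?thesis using fX1 by (meson finite_imageD finite_subset)
    qed
    have injS: "inj_on (\<lambda>d. vec {d}) S" by (auto simp: inj_on_def vec_def fun_eq_iff)
    have fS: "finite S"
    proof -
      have "(\<lambda>d. vec {d}) ` S \<subseteq> X1" unfolding S_def by auto
      then show ?thesis using fX1 injS by (meson finite_imageD finite_subset)
    qed
    have X1eq: "X1 = W ` T \<union> (\<lambda>d. vec {d}) ` S"
      using X(1) unfolding X1_def T_def S_def by blast
    have disj: "W ` T \<inter> (\<lambda>d. vec {d}) ` S = {}"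
      using dis unfolding T_def S_def by blast
    have "sum (\<lambda>v. v) X1 = sum (\<lambda>v. v) (W ` T) + sum (\<lambda>v. v) ((\<lambda>d. vec {d}) ` S)"
      unfolding X1eq using fT fS disj by (intro sum.union_disjoint) auto
    also have "sum (\<lambda>v. v) (W ` T) = sum W T"
      using sum.reindex[of W T "\<lambda>v. v"] injW unfolding T_def by (simp add: inj_on_subset)
    also have "sum (\<lambda>v. v) ((\<lambda>d. vec {d}) ` S) = (\<Sum>d\<in>S. vec {d})"
      using sum.reindex[OF injS, of "\<lambda>v. v"] by simp
    also have "\<dots> = vec S" using fS by (rule vec_singletons)
    finally have eqq: "sum (\<lambda>v. v) X1 = sum W T + vec S" .
    then have "sum W T + vec S = 0" using s1 by metis
    moreover have "S \<subseteq> D0" "T \<subseteq> K" unfolding S_def T_def by auto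
    ultimately have "T = {} \<and> S = {}" using P fT by blast
    then have "X1 = {}" using X1eq by simp
    then show "u v = 0" using v unfolding X1_def by blast
  qed
qed

lemma plim_eq:
  assumes q: "free_ultrafilter q" and A: "{n. x n = v} \<in> q"
  shows "plim q x = v"
  unfolding plim_def
proof (rule the_equality)
  show "{n. x n = v} \<in> q" by (rule A)
  fix i assume i: "{n. x n = i} \<in> q"
  show "i = v"
  proof (rule ccontr)
    assume "i \<noteq> v"
    then have "{n. x n = i} \<inter> {n. x n = v} = {}" by auto
    then show False using q i A unfolding free_ultrafilter_def by metis
  qed
qed

lemma fuD:
  assumes q: "free_ultrafilter q"
  shows "\<forall>A. A \<in> q \<or> - A \<in> q" "\<forall>A. finite A \<longrightarrow> A \<notin> q"
    "\<forall>A B. A \<in> q \<and> B \<in> q \<longrightarrow> A \<inter> B \<in> q" "\<forall>A B. A \<in> q \<and> A \<subseteq> B \<longrightarrow> B \<in> q"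
  using q unfolding free_ultrafilter_def by simp_all
lemma cofin:
  assumes q: "free_ultrafilter q" and A: "A \<in> q" and X: "finite X"
  shows "A - X \<in> q"
proof -
  have "X \<notin> q" using fuD(2)[OF q] X by blast
  then have "- X \<in> q" using fuD(1)[OF q] by blast
  then have "A \<inter> - X \<in> q" using fuD(3)[OF q] A by blast
  then show ?thesis by (simp add: Diff_eq)
qed
lemma sup_in:
  assumes q: "free_ultrafilter q" and A: "A \<in> q" and "A \<subseteq> B"
  shows "B \<in> q"
  using fuD(4)[OF q] A assms(3) by blast

lemma bit_add_eq1: "((x::bit) + y = 1) = ((x = 1) \<noteq> (y = 1))"
  by (cases x; cases y) auto

lemma singleton_good:
  assumes "inj (en :: nat \<Rightarrow> 'a)" shows "good_seq (\<lambda>n. {en n})"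
proof -
  have "indep_ix (\<lambda>n. vec {en n}) UNIV" unfolding indep_ix_def
  proof (intro allI impI)
    fix T :: "nat set" assume T: "T \<subseteq> UNIV \<and> finite T \<and> T \<noteq> {}"
    have ij: "inj_on en T" using assms by (meson inj_on_subset subset_UNIV)
    have "(\<Sum>n\<in>T. vec {en n}) = (\<Sum>d\<in>en ` T. vec {d})"
      using sum.reindex[OF ij, of "\<lambda>d. vec {d}"] by simp
    also have "\<dots> = vec (en ` T)" using T by (intro vec_singletons) auto
    finally have eq: "(\<Sum>n\<in>T. vec {en n}) = vec (en ` T)" .
    have "en ` T \<noteq> {}" using T by blast
    then have "vec (en ` T) \<noteq> 0" using vec_zero_iff by metis
    then show "(\<Sum>n\<in>T. vec {en n}) \<noteq> 0" using eq by metis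
  qed
  then have "lin_indep_fam (\<lambda>n. {en n}) UNIV" by (rule ix_to_fam)
  then show ?thesis unfolding good_seq_def lin_indep_fam_def by auto
qed

theorem mainTheorem6:
  fixes p :: "'k \<Rightarrow> nat set set"
    and I D D0 :: "'k set"
    and f :: "'k \<Rightarrow> nat \<Rightarrow> 'k set"
    and F :: "'k \<Rightarrow> bool"
  assumes card2c: "(UNIV :: 'k set) \<approx> (UNIV :: nat set set)"
    and pfree: "\<forall>\<alpha>. free_ultrafilter (p \<alpha>)"
    and P: "propP p"
    and fgood: "\<forall>\<alpha>\<in>I. good_seq (f \<alpha>)"
    and Dcount: "countable D" and Dinf: "infinite D"
    and Dclosed: "\<forall>\<alpha>\<in>D \<inter> I. (\<Union>n. f \<alpha> n) \<subseteq> D"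
    and D0: "D0 \<subseteq> D" "finite D0"
  shows "\<exists>\<phi> :: 'k set \<Rightarrow> bool. z2_hom D \<phi> \<and>
           (\<forall>\<alpha>\<in>D \<inter> I. \<phi> {\<alpha>} = plim (p \<alpha>) (\<lambda>n. \<phi> (f \<alpha> n))) \<and>
           (\<forall>d\<in>D0. \<phi> {d} = F d)"
proof -
  obtain en :: "nat \<Rightarrow> 'k" where en: "inj en" using Dinf infinite_countable_subset by blast
  define T0 where "T0 \<alpha> = (if \<exists>T. finite T \<and> sum (\<lambda>n. vec (f \<alpha> n)) T = vec {\<alpha>}
      then (SOME T. finite T \<and> sum (\<lambda>n. vec (f \<alpha> n)) T = vec {\<alpha>}) else {})" for \<alpha>
  define g where "g \<alpha> = (if \<alpha> \<in> I then (\<lambda>n. if n \<in> T0 \<alpha> then f \<alpha> n else symd (f \<alpha> n) {\<alpha>})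
      else (\<lambda>n. {en n}))" for \<alpha>
  have fT0: "finite (T0 \<alpha>)" if "\<alpha> \<in> I" for \<alpha>
  proof -
    have "good_seq (f \<alpha>)" using fgood that by blast
    from modseq(1)[OF this, of \<alpha>] show ?thesis unfolding T0_def .
  qed
  have gg: "good_seq (g \<alpha>)" for \<alpha>
  proof (cases "\<alpha> \<in> I")
    case True
    have "good_seq (f \<alpha>)" using fgood True by blast
    from modseq(2)[OF this, of \<alpha>] have "good_seq (\<lambda>n. if n \<in> T0 \<alpha> then f \<alpha> n else symd (f \<alpha> n) {\<alpha>})"
      unfolding T0_def .
    moreover have "g \<alpha> = (\<lambda>n. if n \<in> T0 \<alpha> then f \<alpha> n else symd (f \<alpha> n) {\<alpha>})"
      unfolding g_def using True by (rule if_P)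
    ultimately show ?thesis by simp
  next
    case False
    have "g \<alpha> = (\<lambda>n. {en n})" unfolding g_def using False by (rule if_not_P)
    then show ?thesis using singleton_good[OF en] by simp
  qed
  obtain U where U: "\<forall>\<alpha>\<in>D. U \<alpha> \<in> p \<alpha>"
    and Uind: "lin_indep_fam (\<lambda>(\<alpha>, n). g \<alpha> n) {(\<alpha>, n). \<alpha> \<in> D \<and> n \<in> U \<alpha>}"
  proof -
    have "countable D \<and> infinite D \<and> (\<forall>\<alpha>\<in>D. good_seq (g \<alpha>))" using Dcount Dinf gg by blast
    then have "\<exists>U::'k \<Rightarrow> nat set. (\<forall>\<alpha>\<in>D. U \<alpha> \<in> p \<alpha>) \<and>
        (\<forall>\<alpha>\<in>D. \<forall>\<beta>\<in>D. \<alpha> \<noteq> \<beta> \<longrightarrow> U \<alpha> \<inter> U \<beta> = {}) \<and>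
        lin_indep_fam (\<lambda>(\<alpha>, n). g \<alpha> n) {(\<alpha>, n). \<alpha> \<in> D \<and> n \<in> U \<alpha>}"
      using P unfolding propP_def by (elim allE impE)
    then show ?thesis using that by blast
  qed
  define K where "K = {(\<alpha>, n). \<alpha> \<in> D \<and> n \<in> U \<alpha>}"
  define W where "W i = vec ((\<lambda>(\<alpha>, n). g \<alpha> n) i)" for i
  have iW: "indep_ix W K" unfolding W_def K_def using fam_to_ix[OF Uind] by simp
  obtain R where fR: "finite R"
    and Rp: "\<forall>T S. T \<subseteq> K - R \<and> finite T \<and> S \<subseteq> D0 \<and> sum W T + vec S = 0 \<longrightarrow> T = {} \<and> S = {}"
    using remove_finite[OF iW D0(2)] by blast
  define K2 where "K2 = {(\<alpha>, n). \<alpha> \<in> D \<inter> I \<and> n \<in> U \<alpha> \<and> n \<notin> T0 \<alpha> \<and> (\<alpha>, n) \<notin> R}"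
  have K2sub: "K2 \<subseteq> K - R" unfolding K2_def K_def by auto
  have Rp2: "\<forall>T S. T \<subseteq> K2 \<and> finite T \<and> S \<subseteq> D0 \<and> sum W T + vec S = 0 \<longrightarrow> T = {} \<and> S = {}"
  proof (intro allI impI)
    fix T S assume H: "T \<subseteq> K2 \<and> finite T \<and> S \<subseteq> D0 \<and> sum W T + vec S = 0"
    then have "T \<subseteq> K - R" using K2sub by blast
    then show "T = {} \<and> S = {}" using Rp[rule_format, of T S] H by blast
  qed
  define C where "C = W ` K2 \<union> (\<lambda>d. vec {d}) ` D0"
  interpret VP: vector_space_pair "scl :: bit \<Rightarrow> ('k \<Rightarrow> bit) \<Rightarrow> _" "(*) :: bit \<Rightarrow> bit \<Rightarrow> bit"
    by (rule vsp)
  have Cind: "\<not> VP.vs1.dependent C" unfolding C_def by (rule indep_C[OF Rp2])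
  define h :: "('k \<Rightarrow> bit) \<Rightarrow> bit" where "h v = (if \<exists>d\<in>D0. v = vec {d} \<and> F d then 1 else 0)" for v
  define \<Phi> where "\<Phi> = VP.construct C h"
  have lin: "Vector_Spaces.linear scl (*) \<Phi>" unfolding \<Phi>_def by (rule VP.linear_construct[OF Cind])
  have \<Phi>C: "\<Phi> v = h v" if "v \<in> C" for v
    unfolding \<Phi>_def by (rule VP.construct_basis[OF Cind that])
  have \<Phi>add: "\<Phi> (x + y) = \<Phi> x + \<Phi> y" for x y by (rule VP.linear_add[OF lin])
  define \<phi> where "\<phi> A = (\<Phi> (vec A) = 1)" for A
  have hom: "z2_hom D \<phi>"
    unfolding z2_hom_def \<phi>_def by (simp add: vec_symd \<Phi>add bit_add_eq1)
  have vinj: "vec {d} = vec {d'} \<longleftrightarrow> d = d'" for d d' :: 'k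
    by (auto simp: vec_def fun_eq_iff)
  have dpart: "\<phi> {d} = F d" if "d \<in> D0" for d
  proof -
    have "vec {d} \<in> C" unfolding C_def using that by blast
    then have "\<Phi> (vec {d}) = h (vec {d})" by (rule \<Phi>C)
    also have "h (vec {d}) = (if F d then 1 else 0)" unfolding h_def using that vinj by auto
    finally show ?thesis unfolding \<phi>_def by simp
  qed
  have apart: "\<phi> {\<alpha>} = plim (p \<alpha>) (\<lambda>n. \<phi> (f \<alpha> n))" if a: "\<alpha> \<in> D \<inter> I" for \<alpha>
  proof -
    have key: "\<phi> (f \<alpha> n) = \<phi> {\<alpha>}" if n: "(\<alpha>, n) \<in> K2" for n
    proof -
      have WC: "W (\<alpha>, n) \<in> C" unfolding C_def using n by blast
      have nd: "W (\<alpha>, n) \<noteq> vec {d}" if d: "d \<in> D0" for d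
      proof
        assume "W (\<alpha>, n) = vec {d}"
        then have "sum W {(\<alpha>, n)} + vec {d} = 0" by (simp add: fun_add_self)
        then show False using Rp2[rule_format, of "{(\<alpha>, n)}" "{d}"] n d by auto
      qed
      have "\<Phi> (W (\<alpha>, n)) = 0" using \<Phi>C[OF WC] nd unfolding h_def by auto
      moreover have "W (\<alpha>, n) = vec (f \<alpha> n) + vec {\<alpha>}"
        using n a unfolding W_def g_def K2_def by (simp add: vec_symd)
      ultimately have "\<Phi> (vec (f \<alpha> n)) + \<Phi> (vec {\<alpha>}) = 0" by (simp add: \<Phi>add)
      then have "\<Phi> (vec (f \<alpha> n)) = \<Phi> (vec {\<alpha>})" by (metis add.left_neutral add.assoc bit_add_self)
      then show ?thesis unfolding \<phi>_def by simp
    qed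
    have fRa: "finite {n. (\<alpha>, n) \<in> R}"
      using finite_imageI[OF fR, of snd] by (rule finite_subset[rotated]) force
    have "U \<alpha> - T0 \<alpha> - {n. (\<alpha>, n) \<in> R} \<in> p \<alpha>"
      using pfree U a fT0 fRa by (intro cofin) auto
    moreover have "U \<alpha> - T0 \<alpha> - {n. (\<alpha>, n) \<in> R} \<subseteq> {n. \<phi> (f \<alpha> n) = \<phi> {\<alpha>}}"
      using key a unfolding K2_def by auto
    ultimately have "{n. \<phi> (f \<alpha> n) = \<phi> {\<alpha>}} \<in> p \<alpha>" by (rule sup_in[OF pfree[rule_format]])
    then have "plim (p \<alpha>) (\<lambda>n. \<phi> (f \<alpha> n)) = \<phi> {\<alpha>}" by (rule plim_eq[OF pfree[rule_format]])
    then show ?thesis by simp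
  qed
  show ?thesis using hom apart dpart by blast
qed

end
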